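(* Consider the Kudryashov–Sinelshchikov equation $$F:=u_t+uu_x-(1+u)u_{xx}-u_x^2=0$$ for $u=u(t,x)$. Each of the following pairs $(C^1,C^2)$ is a conserved vector for this equation, i.e. $D_tC^1+D_xC^2=0$ holds on every (sufficiently smooth) solution $u$: (1) $C^1=-u_x e^{-t-x}$, $C^2=\big(u_t+(1+u)u_x\big)e^{-t-x}$; (2) $C^1=\big(\tfrac{u^2}{2}-(1+u)u_x\big)e^{-t-x}$, $C^2=\big(-\tfrac{u^2}{2}+(1+u)u_t+(1+u)u_x\big)e^{-t-x}$; (3) $C^1=\big(-(1+u)+\tfrac{t u^2}{2}-t u u_x\big)e^{-t-x}$, $C^2=\big((1+u)+(1+u)u_x+\tfrac{u^2}{2}+t u u_t-\tfrac{t u^2}{2}\big)e^{-t-x}$.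
   Context: $D_t$ and $D_x$ denote the total derivative operators with respect to $t$ and $x$. *)

theory Defs
  imports "HOL-Analysis.Analysis"
begin

text \<open>Functions of two real variables u(t,x) are curried: u :: real => real => real.
  pt f / px f are the partial derivatives with respect to t / x (for a function
  of (t,x) the total derivatives D_t, D_x coincide with these partial derivatives
  once u is substituted).\<close>

definition pt :: "(real \<Rightarrow> real \<Rightarrow> real) \<Rightarrow> real \<Rightarrow> real \<Rightarrow> real" where
  "pt f t x = deriv (\<lambda>s. f s x) t"

definition px :: "(real \<Rightarrow> real \<Rightarrow> real) \<Rightarrow> real \<Rightarrow> real \<Rightarrow> real" where
  "px f t x = deriv (\<lambda>y. f t y) x"

definition has_partials :: "(real \<Rightarrow> real \<Rightarrow> real) \<Rightarrow> bool" where
  "has_partials f \<longleftrightarrow>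
     (\<forall>t x. (\<lambda>s. f s x) differentiable (at t) \<and> (\<lambda>y. f t y) differentiable (at x))"

definition C2_plane :: "(real \<Rightarrow> real \<Rightarrow> real) \<Rightarrow> bool" where
  "C2_plane u \<longleftrightarrow>
     has_partials u \<and> has_partials (pt u) \<and> has_partials (px u) \<and>
     (\<forall>g \<in> {u, pt u, px u, pt (pt u), pt (px u), px (pt u), px (px u)}.
        continuous_on UNIV (\<lambda>(t, x). g t x))"

end

theory Submission
  imports Defs
begin

lemma schwarz:
  fixes f ft fx ftx fxt :: "real \<Rightarrow> real \<Rightarrow> real"
  assumes D1: "\<And>s y. ((\<lambda>s. f s y) has_real_derivative ft s y) (at s)"
    and D2: "\<And>s y. ((\<lambda>y. f s y) has_real_derivative fx s y) (at y)"
    and D3: "\<And>s y. ((\<lambda>y. ft s y) has_real_derivative ftx s y) (at y)"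
    and D4: "\<And>s y. ((\<lambda>s. fx s y) has_real_derivative fxt s y) (at s)"
    and C3: "continuous (at (t,x)) (\<lambda>(s,y). ftx s y)"
    and C4: "continuous (at (t,x)) (\<lambda>(s,y). fxt s y)"
  shows "ftx t x = fxt t x"
proof (rule ccontr)
  assume ne: "ftx t x \<noteq> fxt t x"
  define e where "e = \<bar>ftx t x - fxt t x\<bar> / 2"
  have e: "e > 0" using ne by (simp add: e_def)
  obtain d1 where d1: "d1 > 0" "\<And>p. dist p (t,x) < d1 \<Longrightarrow> dist ((\<lambda>(s,y). ftx s y) p) (ftx t x) < e"
    using C3 e unfolding continuous_at_eps_delta by fastforce
  obtain d2 where d2: "d2 > 0" "\<And>p. dist p (t,x) < d2 \<Longrightarrow> dist ((\<lambda>(s,y). fxt s y) p) (fxt t x) < e"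
    using C4 e unfolding continuous_at_eps_delta by fastforce
  define h where "h = min d1 d2 / 4"
  have h: "h > 0" "2*h < d1" "2*h < d2" using d1 d2 by (auto simp: h_def)
  define \<Delta> where "\<Delta> = f (t+h) (x+h) - f (t+h) x - f t (x+h) + f t x"
  obtain s1 where s1: "t < s1" "s1 < t+h"
     "(f (t+h) (x+h) - f (t+h) x) - (f t (x+h) - f t x) = (t+h-t) * (ft s1 (x+h) - ft s1 x)"
  proof -
    have "\<And>s. ((\<lambda>s. f s (x+h) - f s x) has_real_derivative (ft s (x+h) - ft s x)) (at s)"
      by (intro DERIV_diff D1)
    then show ?thesis using that MVT2[of t "t+h" "\<lambda>s. f s (x+h) - f s x" "\<lambda>s. ft s (x+h) - ft s x"] h
      by auto
  qed
  obtain y1 where y1: "x < y1" "y1 < x+h" "ft s1 (x+h) - ft s1 x = (x+h-x) * ftx s1 y1"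
    using MVT2[of x "x+h" "\<lambda>y. ft s1 y" "\<lambda>y. ftx s1 y"] h D3 by auto
  obtain y2 where y2: "x < y2" "y2 < x+h"
     "(f (t+h) (x+h) - f t (x+h)) - (f (t+h) x - f t x) = (x+h-x) * (fx (t+h) y2 - fx t y2)"
  proof -
    have "\<And>y. ((\<lambda>y. f (t+h) y - f t y) has_real_derivative (fx (t+h) y - fx t y)) (at y)"
      by (intro DERIV_diff D2)
    then show ?thesis using that MVT2[of x "x+h" "\<lambda>y. f (t+h) y - f t y" "\<lambda>y. fx (t+h) y - fx t y"] h
      by auto
  qed
  obtain s2 where s2: "t < s2" "s2 < t+h" "fx (t+h) y2 - fx t y2 = (t+h-t) * fxt s2 y2"
    using MVT2[of t "t+h" "\<lambda>s. fx s y2" "\<lambda>s. fxt s y2"] h D4 by auto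
  have "h * h * ftx s1 y1 = h * h * fxt s2 y2"
    using s1(3) y1(3) y2(3) s2(3) by (simp add: algebra_simps)
  hence eq: "ftx s1 y1 = fxt s2 y2" using h by simp
  have dd: "dist (a,b) (t,x) < 2*h" if "t < a" "a < t+h" "x < b" "b < x+h" for a b
  proof -
    have "dist (a,b) (t,x) = sqrt ((a-t)\<^sup>2 + (b-x)\<^sup>2)"
      by (simp add: dist_Pair_Pair dist_real_def)
    also have "\<dots> \<le> \<bar>a-t\<bar> + \<bar>b-x\<bar>" by (rule sqrt_sum_squares_le_sum_abs)
    also have "\<dots> < 2*h" using that by simp
    finally show ?thesis .
  qed
  have "dist (ftx s1 y1) (ftx t x) < e" using d1(2)[of "(s1,y1)"] dd[of s1 y1] s1 y1 h by simp
  moreover have "dist (fxt s2 y2) (fxt t x) < e" using d2(2)[of "(s2,y2)"] dd[of s2 y2] s2 y2 h by simp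
  ultimately show False using eq unfolding e_def dist_real_def by (simp add: abs_if split: if_splits)
qed

theorem mainTheorem5:
  fixes u :: "real \<Rightarrow> real \<Rightarrow> real"
  assumes smooth: "C2_plane u"
    and pde: "\<forall>t x. pt u t x + u t x * px u t x - (1 + u t x) * px (px u) t x
                      - (px u t x)\<^sup>2 = 0"
  shows
    "(let C1 = (\<lambda>t x. - px u t x * exp (- t - x));
          C2 = (\<lambda>t x. (pt u t x + (1 + u t x) * px u t x) * exp (- t - x))
      in \<forall>t x. pt C1 t x + px C2 t x = 0)
   \<and> (let C1 = (\<lambda>t x. ((u t x)\<^sup>2 / 2 - (1 + u t x) * px u t x) * exp (- t - x));
          C2 = (\<lambda>t x. (- (u t x)\<^sup>2 / 2 + (1 + u t x) * pt u t x
                        + (1 + u t x) * px u t x) * exp (- t - x))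
      in \<forall>t x. pt C1 t x + px C2 t x = 0)
   \<and> (let C1 = (\<lambda>t x. (- (1 + u t x) + t * (u t x)\<^sup>2 / 2 - t * u t x * px u t x)
                        * exp (- t - x));
          C2 = (\<lambda>t x. ((1 + u t x) + (1 + u t x) * px u t x + (u t x)\<^sup>2 / 2
                        + t * u t x * pt u t x - t * (u t x)\<^sup>2 / 2) * exp (- t - x))
      in \<forall>t x. pt C1 t x + px C2 t x = 0)"
proof -
  have hp: "has_partials u" "has_partials (pt u)" "has_partials (px u)"
    and cont: "\<And>g. g \<in> {u, pt u, px u, pt (pt u), pt (px u), px (pt u), px (px u)} \<Longrightarrow>
        continuous_on UNIV (\<lambda>(t, x). g t x)"
    using smooth unfolding C2_plane_def by auto
  have T: "\<And>g s y. has_partials g \<Longrightarrow> ((\<lambda>s. g s y) has_real_derivative pt g s y) (at s)"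
    unfolding has_partials_def pt_def using DERIV_deriv_iff_real_differentiable by blast
  have X: "\<And>g s y. has_partials g \<Longrightarrow> ((\<lambda>y. g s y) has_real_derivative px g s y) (at y)"
    unfolding has_partials_def px_def using DERIV_deriv_iff_real_differentiable by blast
  have TW: "\<And>g s y S D. has_partials g \<Longrightarrow> D = pt g s y \<Longrightarrow> ((\<lambda>s. g s y) has_real_derivative D) (at s within S)"
    using T has_field_derivative_at_within by blast
  have XW: "\<And>g s y S D. has_partials g \<Longrightarrow> D = px g s y \<Longrightarrow> ((\<lambda>y. g s y) has_real_derivative D) (at y within S)"
    using X has_field_derivative_at_within by blast
  have sym: "px (pt u) s y = pt (px u) s y" for s y
  proof (rule schwarz[of u "pt u" "px u" "px (pt u)" "pt (px u)" s y])
    show "continuous (at (s, y)) (\<lambda>(s, y). px (pt u) s y)"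
      using cont[of "px (pt u)"] by (simp add: continuous_on_eq_continuous_at)
    show "continuous (at (s, y)) (\<lambda>(s, y). pt (px u) s y)"
      using cont[of "pt (px u)"] by (simp add: continuous_on_eq_continuous_at)
  qed (use T X hp in auto)
  have ut: "pt u t x = - u t x * px u t x + (1 + u t x) * px (px u) t x + (px u t x)\<^sup>2" for t x
    using pde[rule_format, of t x] by linarith
  note R = TW[OF hp(1)] TW[OF hp(2)] TW[OF hp(3)] XW[OF hp(1)] XW[OF hp(2)] XW[OF hp(3)]
  show ?thesis
    unfolding Let_def
  proof (intro conjI allI)
    fix t x
    show "pt (\<lambda>t x. - px u t x * exp (- t - x)) t x +
       px (\<lambda>t x. (pt u t x + (1 + u t x) * px u t x) * exp (- t - x)) t x = 0"
      unfolding pt_def[of "\<lambda>t x. - px u t x * exp (- t - x)"]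
        px_def[of "\<lambda>t x. (pt u t x + (1 + u t x) * px u t x) * exp (- t - x)"]
      apply (subst DERIV_imp_deriv, (rule derivative_eq_intros R refl | (simp; fail))+)
      apply (subst DERIV_imp_deriv, (rule derivative_eq_intros R refl | (simp; fail))+)
      apply (simp add: sym ut; (simp add: field_simps power2_eq_square)?; (simp add: algebra_simps)?)
      done
  next
    fix t x
    show "pt (\<lambda>t x. ((u t x)\<^sup>2 / 2 - (1 + u t x) * px u t x) * exp (- t - x)) t x +
       px (\<lambda>t x. (- (u t x)\<^sup>2 / 2 + (1 + u t x) * pt u t x
                        + (1 + u t x) * px u t x) * exp (- t - x)) t x = 0"
      unfolding pt_def[of "\<lambda>t x. ((u t x)\<^sup>2 / 2 - (1 + u t x) * px u t x) * exp (- t - x)"]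
        px_def[of "\<lambda>t x. (- (u t x)\<^sup>2 / 2 + (1 + u t x) * pt u t x
                        + (1 + u t x) * px u t x) * exp (- t - x)"]
      apply (subst DERIV_imp_deriv, (rule derivative_eq_intros R refl | (simp; fail))+)
      apply (subst DERIV_imp_deriv, (rule derivative_eq_intros R refl | (simp; fail))+)
      apply (simp add: sym ut; (simp add: field_simps power2_eq_square)?; (simp add: algebra_simps)?)
      done
  next
    fix t x
    show "pt (\<lambda>t x. (- (1 + u t x) + t * (u t x)\<^sup>2 / 2 - t * u t x * px u t x)
                        * exp (- t - x)) t x +
       px (\<lambda>t x. ((1 + u t x) + (1 + u t x) * px u t x + (u t x)\<^sup>2 / 2
                        + t * u t x * pt u t x - t * (u t x)\<^sup>2 / 2) * exp (- t - x)) t x = 0"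
      unfolding pt_def[of "\<lambda>t x. (- (1 + u t x) + t * (u t x)\<^sup>2 / 2 - t * u t x * px u t x)
                        * exp (- t - x)"]
        px_def[of "\<lambda>t x. ((1 + u t x) + (1 + u t x) * px u t x + (u t x)\<^sup>2 / 2
                        + t * u t x * pt u t x - t * (u t x)\<^sup>2 / 2) * exp (- t - x)"]
      apply (subst DERIV_imp_deriv, (rule derivative_eq_intros R refl | (simp; fail))+)
      apply (subst DERIV_imp_deriv, (rule derivative_eq_intros R refl | (simp; fail))+)
      apply (simp add: sym ut; (simp add: field_simps power2_eq_square)?; (simp add: algebra_simps)?)
      done
  qed
qed

end
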